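(* Let $(\mathcal{C},\mathbb{E},\mathfrak{s})$ satisfy (ET1) and (ET2), and let $\mathcal{I}$ be a special precovering ideal of $\mathcal{C}$. Then $(\mathcal{I},\mathcal{I}^{\perp_{\mathbb{E}}})$ is an $\mathbb{E}$-cotorsion pair, i.e. $\mathcal{I}={}^{\perp_{\mathbb{E}}}(\mathcal{I}^{\perp_{\mathbb{E}}})$.
   Context: $\mathcal{C}$ additive, $\mathbb{E}:\mathcal{C}^{\mathrm{op}}\times\mathcal{C}\to\mathrm{Ab}$ biadditive (ET1); for $\delta\in\mathbb{E}(C,A)$, $a:A\to A'$, $c:C'\to C$ put $a_\star\delta=\mathbb{E}(C,a)(\delta)$, $c^\star\delta=\mathbb{E}(c,A)(\delta)$. (ET2): $\mathfrak{s}$ is an additive realization (Nakaoka–Palu): each $\delta\in\mathbb{E}(C,A)$ is assigned an equivalence class of sequences $A\xrightarrow{x}B\xrightarrow{y}C$ (up to isomorphism of the middle term compatible with the maps), $0$ is realized by split sequences, realization respects direct sums, and if $a_\star\delta=c^\star\delta'$ ($a:A\to A'$, $c:C\to C'$) there is $b:B\to B'$ making the realizing sequences commute. Realized pairs are $\mathbb{E}$-triangles $A\to B\to C\overset{\delta}{\dashrightarrow}$; such $(a,b,c)$ are morphisms of $\mathbb{E}$-triangles. An ideal: class of morphisms with zeros, closed under sums and two-sided composition. For a class $\mathcal{M}$ of morphisms: $\mathcal{M}^{\perp_{\mathbb{E}}}=\{g:A\to Y\mid m^\star g_\star\delta=0\ \forall m\in\mathcal{M},\,m:X\to C,\ \forall\delta\in\mathbb{E}(C,A)\}$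 and ${}^{\perp_{\mathbb{E}}}\mathcal{M}=\{g:X\to C\mid g^\star m_\star\delta=0\ \forall m\in\mathcal{M},\,m:A\to Y,\ \forall\delta\in\mathbb{E}(C,A)\}$. An $\mathbb{E}$-cotorsion pair is a pair of ideals $(\mathcal{I},\mathcal{J})$ with $\mathcal{I}={}^{\perp_{\mathbb{E}}}\mathcal{J}$ and $\mathcal{J}=\mathcal{I}^{\perp_{\mathbb{E}}}$. A special $\mathcal{I}$-precover of $C$ is $i:X\to C$ in $\mathcal{I}$ with $\mathbb{E}$-triangles $A\to B\to C\overset{\delta}{\dashrightarrow}$, $A'\to X\xrightarrow{i}C\overset{\delta'}{\dashrightarrow}$ and a morphism of $\mathbb{E}$-triangles $(j,b,\mathrm{id}_C)$ between them with $j\in\mathcal{I}^{\perp_{\mathbb{E}}}$. $\mathcal{I}$ is special precovering if every object has a special $\mathcal{I}$-precover. *)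

theory Defs
  imports "HOL-Algebra.Group"
begin

record ('o, 'm) addcat =
  Ob   :: "'o set"
  Mor  :: "'m set"
  Dom  :: "'m \<Rightarrow> 'o"
  Cod  :: "'m \<Rightarrow> 'o"
  Id   :: "'o \<Rightarrow> 'm"
  Comp :: "'m \<Rightarrow> 'm \<Rightarrow> 'm"   (* Comp C g f = g o f *)
  Add  :: "'m \<Rightarrow> 'm \<Rightarrow> 'm"
  Zero :: "'o \<Rightarrow> 'o \<Rightarrow> 'm"   (* Zero C X Y : X \<rightarrow> Y *)

definition Hom :: "('o, 'm, 'z) addcat_scheme \<Rightarrow> 'o \<Rightarrow> 'o \<Rightarrow> 'm set" where
  "Hom C X Y = {f \<in> Mor C. Dom C f = X \<and> Cod C f = Y}"

definition is_category :: "('o, 'm, 'z) addcat_scheme \<Rightarrow> bool" where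
  "is_category C \<longleftrightarrow>
     (\<forall>f \<in> Mor C. Dom C f \<in> Ob C \<and> Cod C f \<in> Ob C) \<and>
     (\<forall>X \<in> Ob C. Id C X \<in> Hom C X X) \<and>
     (\<forall>X \<in> Ob C. \<forall>Y \<in> Ob C. \<forall>Z \<in> Ob C. \<forall>f \<in> Hom C X Y. \<forall>g \<in> Hom C Y Z.
        Comp C g f \<in> Hom C X Z) \<and>
     (\<forall>f \<in> Mor C. Comp C (Id C (Cod C f)) f = f \<and> Comp C f (Id C (Dom C f)) = f) \<and>
     (\<forall>f \<in> Mor C. \<forall>g \<in> Mor C. \<forall>h \<in> Mor C. Dom C g = Cod C f \<longrightarrow> Dom C h = Cod C g \<longrightarrow>
        Comp C h (Comp C g f) = Comp C (Comp C h g) f)"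

definition hom_group :: "('o, 'm, 'z) addcat_scheme \<Rightarrow> 'o \<Rightarrow> 'o \<Rightarrow> 'm monoid" where
  "hom_group C X Y = \<lparr>carrier = Hom C X Y, mult = Add C, one = Zero C X Y\<rparr>"

definition is_preadditive :: "('o, 'm, 'z) addcat_scheme \<Rightarrow> bool" where
  "is_preadditive C \<longleftrightarrow> is_category C \<and>
     (\<forall>X \<in> Ob C. \<forall>Y \<in> Ob C. comm_group (hom_group C X Y)) \<and>
     (\<forall>X \<in> Ob C. \<forall>Y \<in> Ob C. \<forall>Z \<in> Ob C. \<forall>f \<in> Hom C X Y. \<forall>f' \<in> Hom C X Y. \<forall>g \<in> Hom C Y Z.
        Comp C g (Add C f f') = Add C (Comp C g f) (Comp C g f')) \<and>
     (\<forall>X \<in> Ob C. \<forall>Y \<in> Ob C. \<forall>Z \<in> Ob C. \<forall>f \<in> Hom C X Y. \<forall>g \<in> Hom C Y Z. \<forall>g' \<in> Hom C Y Z.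
        Comp C (Add C g g') f = Add C (Comp C g f) (Comp C g' f))"

definition is_biprod ::
  "('o, 'm, 'z) addcat_scheme \<Rightarrow> 'o \<Rightarrow> 'o \<Rightarrow> 'o \<Rightarrow> 'm \<Rightarrow> 'm \<Rightarrow> 'm \<Rightarrow> 'm \<Rightarrow> bool" where
  "is_biprod C X Y P i1 i2 p1 p2 \<longleftrightarrow>
     P \<in> Ob C \<and> i1 \<in> Hom C X P \<and> i2 \<in> Hom C Y P \<and> p1 \<in> Hom C P X \<and> p2 \<in> Hom C P Y \<and>
     Comp C p1 i1 = Id C X \<and> Comp C p2 i2 = Id C Y \<and>
     Comp C p1 i2 = Zero C Y X \<and> Comp C p2 i1 = Zero C X Y \<and>
     Add C (Comp C i1 p1) (Comp C i2 p2) = Id C P"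

definition is_additive :: "('o, 'm, 'z) addcat_scheme \<Rightarrow> bool" where
  "is_additive C \<longleftrightarrow> is_preadditive C \<and>
     (\<exists>Z \<in> Ob C. Id C Z = Zero C Z Z) \<and>
     (\<forall>X \<in> Ob C. \<forall>Y \<in> Ob C. \<exists>P i1 i2 p1 p2. is_biprod C X Y P i1 i2 p1 p2)"

record ('o, 'm, 'e) extfun =
  Ext   :: "'o \<Rightarrow> 'o \<Rightarrow> 'e set"                 (* Ext E C A = E(C,A) *)
  EAdd  :: "'o \<Rightarrow> 'o \<Rightarrow> 'e \<Rightarrow> 'e \<Rightarrow> 'e"
  EZero :: "'o \<Rightarrow> 'o \<Rightarrow> 'e"
  Push  :: "'o \<Rightarrow> 'm \<Rightarrow> 'e \<Rightarrow> 'e"             (* Push E C a \<delta> = a_* \<delta> = E(C,a)(\<delta>) *)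
  Pull  :: "'o \<Rightarrow> 'm \<Rightarrow> 'e \<Rightarrow> 'e"             (* Pull E A c \<delta> = c^* \<delta> = E(c,A)(\<delta>) *)

definition ext_group :: "('o, 'm, 'e) extfun \<Rightarrow> 'o \<Rightarrow> 'o \<Rightarrow> 'e monoid" where
  "ext_group E C A = \<lparr>carrier = Ext E C A, mult = EAdd E C A, one = EZero E C A\<rparr>"

definition ET1 :: "('o, 'm, 'z) addcat_scheme \<Rightarrow> ('o, 'm, 'e) extfun \<Rightarrow> bool" where
  "ET1 C E \<longleftrightarrow>
     (\<forall>X \<in> Ob C. \<forall>A \<in> Ob C. comm_group (ext_group E X A)) \<and>
     \<comment> \<open>covariant part: \<open>E(X,-)\<close>\<close>
     (\<forall>X \<in> Ob C. \<forall>A \<in> Ob C. \<forall>A' \<in> Ob C. \<forall>a \<in> Hom C A A'.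
        (\<forall>\<delta> \<in> Ext E X A. Push E X a \<delta> \<in> Ext E X A') \<and>
        (\<forall>\<delta> \<in> Ext E X A. \<forall>\<delta>' \<in> Ext E X A.
           Push E X a (EAdd E X A \<delta> \<delta>') = EAdd E X A' (Push E X a \<delta>) (Push E X a \<delta>'))) \<and>
     (\<forall>X \<in> Ob C. \<forall>A \<in> Ob C. \<forall>\<delta> \<in> Ext E X A. Push E X (Id C A) \<delta> = \<delta>) \<and>
     (\<forall>X \<in> Ob C. \<forall>A \<in> Ob C. \<forall>A' \<in> Ob C. \<forall>A'' \<in> Ob C. \<forall>a \<in> Hom C A A'. \<forall>a' \<in> Hom C A' A''.
        \<forall>\<delta> \<in> Ext E X A. Push E X (Comp C a' a) \<delta> = Push E X a' (Push E X a \<delta>)) \<and>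
     (\<forall>X \<in> Ob C. \<forall>A \<in> Ob C. \<forall>A' \<in> Ob C. \<forall>a \<in> Hom C A A'. \<forall>a' \<in> Hom C A A'.
        \<forall>\<delta> \<in> Ext E X A. Push E X (Add C a a') \<delta> = EAdd E X A' (Push E X a \<delta>) (Push E X a' \<delta>)) \<and>
     \<comment> \<open>contravariant part: \<open>E(-,A)\<close>\<close>
     (\<forall>A \<in> Ob C. \<forall>X \<in> Ob C. \<forall>X' \<in> Ob C. \<forall>c \<in> Hom C X' X.
        (\<forall>\<delta> \<in> Ext E X A. Pull E A c \<delta> \<in> Ext E X' A) \<and>
        (\<forall>\<delta> \<in> Ext E X A. \<forall>\<delta>' \<in> Ext E X A.
           Pull E A c (EAdd E X A \<delta> \<delta>') = EAdd E X' A (Pull E A c \<delta>) (Pull E A c \<delta>'))) \<and>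
     (\<forall>A \<in> Ob C. \<forall>X \<in> Ob C. \<forall>\<delta> \<in> Ext E X A. Pull E A (Id C X) \<delta> = \<delta>) \<and>
     (\<forall>A \<in> Ob C. \<forall>X \<in> Ob C. \<forall>X' \<in> Ob C. \<forall>X'' \<in> Ob C. \<forall>c \<in> Hom C X' X. \<forall>c' \<in> Hom C X'' X'.
        \<forall>\<delta> \<in> Ext E X A. Pull E A (Comp C c c') \<delta> = Pull E A c' (Pull E A c \<delta>)) \<and>
     (\<forall>A \<in> Ob C. \<forall>X \<in> Ob C. \<forall>X' \<in> Ob C. \<forall>c \<in> Hom C X' X. \<forall>c' \<in> Hom C X' X.
        \<forall>\<delta> \<in> Ext E X A. Pull E A (Add C c c') \<delta> = EAdd E X' A (Pull E A c \<delta>) (Pull E A c' \<delta>)) \<and>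
     \<comment> \<open>bifunctoriality\<close>
     (\<forall>A \<in> Ob C. \<forall>A' \<in> Ob C. \<forall>X \<in> Ob C. \<forall>X' \<in> Ob C. \<forall>a \<in> Hom C A A'. \<forall>c \<in> Hom C X' X.
        \<forall>\<delta> \<in> Ext E X A. Pull E A' c (Push E X a \<delta>) = Push E X' a (Pull E A c \<delta>))"

text \<open>\<open>s \<delta> x y\<close>: the sequence \<open>Dom x --x--> Cod x = Dom y --y--> Cod y\<close> realizes
  \<open>\<delta> \<in> E(Cod y, Dom x)\<close>, i.e. belongs to the equivalence class \<open>\<s>(\<delta>)\<close>.\<close>
type_synonym ('e, 'm) realization = "'e \<Rightarrow> 'm \<Rightarrow> 'm \<Rightarrow> bool"

definition is_iso_pair :: "('o, 'm, 'z) addcat_scheme \<Rightarrow> 'o \<Rightarrow> 'o \<Rightarrow> 'm \<Rightarrow> 'm \<Rightarrow> bool" where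
  "is_iso_pair C X Y b b' \<longleftrightarrow> b \<in> Hom C X Y \<and> b' \<in> Hom C Y X \<and>
     Comp C b' b = Id C X \<and> Comp C b b' = Id C Y"

definition mor_dsum :: "('o, 'm, 'z) addcat_scheme \<Rightarrow> 'm \<Rightarrow> 'm \<Rightarrow> 'm \<Rightarrow> 'm \<Rightarrow> 'm \<Rightarrow> 'm \<Rightarrow> 'm" where
  "mor_dsum C pX pX' iY iY' f f' = Add C (Comp C iY (Comp C f pX)) (Comp C iY' (Comp C f' pX'))"

definition ext_dsum :: "('o, 'm, 'e) extfun \<Rightarrow> 'o \<Rightarrow> 'o \<Rightarrow> 'o \<Rightarrow> 'o \<Rightarrow>
    'm \<Rightarrow> 'm \<Rightarrow> 'm \<Rightarrow> 'm \<Rightarrow> 'e \<Rightarrow> 'e \<Rightarrow> 'e" where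
  "ext_dsum E A A' PC PA iA iA' pC pC' \<delta> \<delta>' =
     EAdd E PC PA (Push E PC iA (Pull E A pC \<delta>)) (Push E PC iA' (Pull E A' pC' \<delta>'))"

definition ET2 :: "('o, 'm, 'z) addcat_scheme \<Rightarrow> ('o, 'm, 'e) extfun \<Rightarrow> ('e, 'm) realization \<Rightarrow> bool" where
  "ET2 C E s \<longleftrightarrow>
     \<comment> \<open>realizing sequences are composable sequences \<open>A \<rightarrow> B \<rightarrow> C\<close> with \<open>\<delta> \<in> E(C,A)\<close>\<close>
     (\<forall>\<delta> x y. s \<delta> x y \<longrightarrow> x \<in> Mor C \<and> y \<in> Mor C \<and> Cod C x = Dom C y \<and>
        \<delta> \<in> Ext E (Cod C y) (Dom C x)) \<and>
     \<comment> \<open>every \<open>\<delta>\<close> has a realization\<close>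
     (\<forall>X \<in> Ob C. \<forall>A \<in> Ob C. \<forall>\<delta> \<in> Ext E X A. \<exists>x y. s \<delta> x y \<and> Dom C x = A \<and> Cod C y = X) \<and>
     \<comment> \<open>any two realizations of \<open>\<delta>\<close> are equivalent\<close>
     (\<forall>\<delta> x y x' y'. s \<delta> x y \<longrightarrow> s \<delta> x' y' \<longrightarrow> Dom C x = Dom C x' \<longrightarrow> Cod C y = Cod C y' \<longrightarrow>
        (\<exists>b b'. is_iso_pair C (Cod C x) (Cod C x') b b' \<and>
           Comp C b x = x' \<and> Comp C y' b = y)) \<and>
     \<comment> \<open>the class is closed under equivalence\<close>
     (\<forall>\<delta> x y B' b b'. s \<delta> x y \<longrightarrow> is_iso_pair C (Cod C x) B' b b' \<longrightarrow>
        s \<delta> (Comp C b x) (Comp C y b')) \<and>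
     \<comment> \<open>realization of morphisms of extensions\<close>
     (\<forall>\<delta> x y \<delta>' x' y' a c. s \<delta> x y \<longrightarrow> s \<delta>' x' y' \<longrightarrow>
        a \<in> Hom C (Dom C x) (Dom C x') \<longrightarrow> c \<in> Hom C (Cod C y) (Cod C y') \<longrightarrow>
        Push E (Cod C y) a \<delta> = Pull E (Dom C x') c \<delta>' \<longrightarrow>
        (\<exists>b \<in> Hom C (Cod C x) (Cod C x'). Comp C b x = Comp C x' a \<and> Comp C y' b = Comp C c y)) \<and>
     \<comment> \<open>additivity: \<open>0\<close> is realized by split sequences\<close>
     (\<forall>A \<in> Ob C. \<forall>X \<in> Ob C. \<forall>P iA iX pA pX. is_biprod C A X P iA iX pA pX \<longrightarrow>
        s (EZero E X A) iA pX) \<and>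
     \<comment> \<open>additivity: realization respects direct sums\<close>
     (\<forall>\<delta> x y \<delta>' x' y' PA iA iA' pA pA' PB iB iB' pB pB' PC iC iC' pC pC'.
        s \<delta> x y \<longrightarrow> s \<delta>' x' y' \<longrightarrow>
        is_biprod C (Dom C x) (Dom C x') PA iA iA' pA pA' \<longrightarrow>
        is_biprod C (Cod C x) (Cod C x') PB iB iB' pB pB' \<longrightarrow>
        is_biprod C (Cod C y) (Cod C y') PC iC iC' pC pC' \<longrightarrow>
        s (ext_dsum E (Dom C x) (Dom C x') PC PA iA iA' pC pC' \<delta> \<delta>')
          (mor_dsum C pA pA' iB iB' x x') (mor_dsum C pB pB' iC iC' y y'))"

definition is_ideal :: "('o, 'm, 'z) addcat_scheme \<Rightarrow> 'm set \<Rightarrow> bool" where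
  "is_ideal C I \<longleftrightarrow> I \<subseteq> Mor C \<and>
     (\<forall>X \<in> Ob C. \<forall>Y \<in> Ob C. Zero C X Y \<in> I) \<and>
     (\<forall>f \<in> I. \<forall>g \<in> I. Dom C f = Dom C g \<longrightarrow> Cod C f = Cod C g \<longrightarrow> Add C f g \<in> I) \<and>
     (\<forall>f \<in> I. \<forall>g \<in> Mor C. \<forall>h \<in> Mor C. Dom C g = Cod C f \<longrightarrow> Cod C h = Dom C f \<longrightarrow>
        Comp C g (Comp C f h) \<in> I)"

definition perp_right :: "('o, 'm, 'z) addcat_scheme \<Rightarrow> ('o, 'm, 'e) extfun \<Rightarrow> 'm set \<Rightarrow> 'm set" where
  "perp_right C E M = {g \<in> Mor C. \<forall>m \<in> M. \<forall>\<delta> \<in> Ext E (Cod C m) (Dom C g).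
      Pull E (Cod C g) m (Push E (Cod C m) g \<delta>) = EZero E (Dom C m) (Cod C g)}"

definition perp_left :: "('o, 'm, 'z) addcat_scheme \<Rightarrow> ('o, 'm, 'e) extfun \<Rightarrow> 'm set \<Rightarrow> 'm set" where
  "perp_left C E M = {g \<in> Mor C. \<forall>m \<in> M. \<forall>\<delta> \<in> Ext E (Cod C g) (Dom C m).
      Pull E (Cod C m) g (Push E (Cod C g) m \<delta>) = EZero E (Dom C g) (Cod C m)}"

definition is_cotorsion_pair ::
  "('o, 'm, 'z) addcat_scheme \<Rightarrow> ('o, 'm, 'e) extfun \<Rightarrow> 'm set \<Rightarrow> 'm set \<Rightarrow> bool" where
  "is_cotorsion_pair C E I J \<longleftrightarrow> is_ideal C I \<and> is_ideal C J \<and>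
     I = perp_left C E J \<and> J = perp_right C E I"

definition is_triangle_morphism :: "('o, 'm, 'z) addcat_scheme \<Rightarrow> ('o, 'm, 'e) extfun \<Rightarrow>
    ('e, 'm) realization \<Rightarrow> 'e \<Rightarrow> 'm \<Rightarrow> 'm \<Rightarrow> 'e \<Rightarrow> 'm \<Rightarrow> 'm \<Rightarrow> 'm \<Rightarrow> 'm \<Rightarrow> 'm \<Rightarrow> bool" where
  "is_triangle_morphism C E s \<delta> x y \<delta>' x' y' a b c \<longleftrightarrow>
     s \<delta> x y \<and> s \<delta>' x' y' \<and>
     a \<in> Hom C (Dom C x) (Dom C x') \<and> b \<in> Hom C (Cod C x) (Cod C x') \<and>
     c \<in> Hom C (Cod C y) (Cod C y') \<and>
     Comp C b x = Comp C x' a \<and> Comp C y' b = Comp C c y \<and>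
     Push E (Cod C y) a \<delta> = Pull E (Dom C x') c \<delta>'"

definition is_special_precover :: "('o, 'm, 'z) addcat_scheme \<Rightarrow> ('o, 'm, 'e) extfun \<Rightarrow>
    ('e, 'm) realization \<Rightarrow> 'm set \<Rightarrow> 'o \<Rightarrow> 'm \<Rightarrow> bool" where
  "is_special_precover C E s I X i \<longleftrightarrow>
     i \<in> I \<and> i \<in> Mor C \<and> Cod C i = X \<and>
     (\<exists>\<delta> x y \<delta>' x' j b.
        Cod C y = X \<and> Dom C x' \<in> Ob C \<and>
        is_triangle_morphism C E s \<delta> x y \<delta>' x' i j b (Id C X) \<and>
        j \<in> perp_right C E I)"

definition special_precovering :: "('o, 'm, 'z) addcat_scheme \<Rightarrow> ('o, 'm, 'e) extfun \<Rightarrow>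
    ('e, 'm) realization \<Rightarrow> 'm set \<Rightarrow> bool" where
  "special_precovering C E s I \<longleftrightarrow> (\<forall>X \<in> Ob C. \<exists>i. is_special_precover C E s I X i)"

end

theory Submission
  imports Defs
begin

lemma cg_idem:
  assumes "comm_group G" "x \<in> carrier G" "x \<otimes>\<^bsub>G\<^esub> x = x"
  shows "x = \<one>\<^bsub>G\<^esub>"
  using assms group.r_cancel_one[of G x x] comm_group.axioms(2) by metis

lemma ext_zero_in:
  assumes "ET1 C E" "X \<in> Ob C" "A \<in> Ob C"
  shows "EZero E X A \<in> Ext E X A"
        "EAdd E X A (EZero E X A) (EZero E X A) = EZero E X A"
        "\<And>d. d \<in> Ext E X A \<Longrightarrow> EAdd E X A d d = d \<Longrightarrow> d = EZero E X A"
        "\<And>d. d \<in> Ext E X A \<Longrightarrow> EAdd E X A (EZero E X A) d = d"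
proof -
  have g: "comm_group (ext_group E X A)" using assms by (simp add: ET1_def)
  show "EZero E X A \<in> Ext E X A" using comm_groupE(2)[OF g] by (simp add: ext_group_def)
  show "EAdd E X A (EZero E X A) (EZero E X A) = EZero E X A"
    using comm_groupE(5)[OF g comm_groupE(2)[OF g]] by (simp add: ext_group_def)
  show "\<And>d. d \<in> Ext E X A \<Longrightarrow> EAdd E X A d d = d \<Longrightarrow> d = EZero E X A"
    using cg_idem[OF g] by (simp add: ext_group_def)
  show "\<And>d. d \<in> Ext E X A \<Longrightarrow> EAdd E X A (EZero E X A) d = d"
    using comm_groupE(5)[OF g] by (simp add: ext_group_def)
qed

lemma push_in: "ET1 C E \<Longrightarrow> X \<in> Ob C \<Longrightarrow> A \<in> Ob C \<Longrightarrow> A' \<in> Ob C \<Longrightarrow> a \<in> Hom C A A'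
  \<Longrightarrow> \<delta> \<in> Ext E X A \<Longrightarrow> Push E X a \<delta> \<in> Ext E X A'"
  by (simp add: ET1_def)
lemma push_add: "ET1 C E \<Longrightarrow> X \<in> Ob C \<Longrightarrow> A \<in> Ob C \<Longrightarrow> A' \<in> Ob C \<Longrightarrow> a \<in> Hom C A A'
  \<Longrightarrow> \<delta> \<in> Ext E X A \<Longrightarrow> \<delta>' \<in> Ext E X A \<Longrightarrow>
  Push E X a (EAdd E X A \<delta> \<delta>') = EAdd E X A' (Push E X a \<delta>) (Push E X a \<delta>')"
  by (simp add: ET1_def)
lemma push_comp: "ET1 C E \<Longrightarrow> X \<in> Ob C \<Longrightarrow> A \<in> Ob C \<Longrightarrow> A' \<in> Ob C \<Longrightarrow> A'' \<in> Ob C \<Longrightarrow>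
  a \<in> Hom C A A' \<Longrightarrow> a' \<in> Hom C A' A'' \<Longrightarrow>
  \<delta> \<in> Ext E X A \<Longrightarrow> Push E X (Comp C a' a) \<delta> = Push E X a' (Push E X a \<delta>)"
  by (simp add: ET1_def)
lemma push_addmor: "ET1 C E \<Longrightarrow> X \<in> Ob C \<Longrightarrow> A \<in> Ob C \<Longrightarrow> A' \<in> Ob C \<Longrightarrow>
  a \<in> Hom C A A' \<Longrightarrow> a' \<in> Hom C A A' \<Longrightarrow>
  \<delta> \<in> Ext E X A \<Longrightarrow> Push E X (Add C a a') \<delta> = EAdd E X A' (Push E X a \<delta>) (Push E X a' \<delta>)"
  by (simp add: ET1_def)
lemma push_id: "ET1 C E \<Longrightarrow> X \<in> Ob C \<Longrightarrow> A \<in> Ob C \<Longrightarrow> \<delta> \<in> Ext E X A \<Longrightarrow> Push E X (Id C A) \<delta> = \<delta>"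
  by (simp add: ET1_def)
lemma pull_in: "ET1 C E \<Longrightarrow> A \<in> Ob C \<Longrightarrow> X \<in> Ob C \<Longrightarrow> X' \<in> Ob C \<Longrightarrow> c \<in> Hom C X' X
  \<Longrightarrow> \<delta> \<in> Ext E X A \<Longrightarrow> Pull E A c \<delta> \<in> Ext E X' A"
  by (simp add: ET1_def)
lemma pull_add: "ET1 C E \<Longrightarrow> A \<in> Ob C \<Longrightarrow> X \<in> Ob C \<Longrightarrow> X' \<in> Ob C \<Longrightarrow> c \<in> Hom C X' X
  \<Longrightarrow> \<delta> \<in> Ext E X A \<Longrightarrow> \<delta>' \<in> Ext E X A \<Longrightarrow>
  Pull E A c (EAdd E X A \<delta> \<delta>') = EAdd E X' A (Pull E A c \<delta>) (Pull E A c \<delta>')"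
  by (simp add: ET1_def)
lemma pull_id: "ET1 C E \<Longrightarrow> A \<in> Ob C \<Longrightarrow> X \<in> Ob C \<Longrightarrow> \<delta> \<in> Ext E X A \<Longrightarrow> Pull E A (Id C X) \<delta> = \<delta>"
  by (simp add: ET1_def)
lemma bifun: "ET1 C E \<Longrightarrow> A \<in> Ob C \<Longrightarrow> A' \<in> Ob C \<Longrightarrow> X \<in> Ob C \<Longrightarrow> X' \<in> Ob C \<Longrightarrow>
  a \<in> Hom C A A' \<Longrightarrow> c \<in> Hom C X' X \<Longrightarrow>
  \<delta> \<in> Ext E X A \<Longrightarrow> Pull E A' c (Push E X a \<delta>) = Push E X' a (Pull E A c \<delta>)"
  by (simp add: ET1_def)

lemma push_zero:
  assumes "ET1 C E" "X \<in> Ob C" "A \<in> Ob C" "A' \<in> Ob C" "a \<in> Hom C A A'"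
  shows "Push E X a (EZero E X A) = EZero E X A'"
proof -
  note z = ext_zero_in[OF assms(1-3)]
  have i: "Push E X a (EZero E X A) \<in> Ext E X A'" using push_in[OF assms z(1)] .
  have "Push E X a (EZero E X A) = EAdd E X A' (Push E X a (EZero E X A)) (Push E X a (EZero E X A))"
    using push_add[OF assms z(1) z(1)] z(2) by simp
  then show ?thesis using ext_zero_in(3)[OF assms(1,2,4) i] by simp
qed

lemma pull_zero:
  assumes "ET1 C E" "A \<in> Ob C" "X \<in> Ob C" "X' \<in> Ob C" "c \<in> Hom C X' X"
  shows "Pull E A c (EZero E X A) = EZero E X' A"
proof -
  note z = ext_zero_in[OF assms(1,3,2)]
  have i: "Pull E A c (EZero E X A) \<in> Ext E X' A" using pull_in[OF assms z(1)] .
  have "Pull E A c (EZero E X A) = EAdd E X' A (Pull E A c (EZero E X A)) (Pull E A c (EZero E X A))"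
    using pull_add[OF assms z(1) z(1)] z(2) by simp
  then show ?thesis using ext_zero_in(3)[OF assms(1,4,2) i] by simp
qed

lemma zero_hom:
  assumes "is_preadditive C" "X \<in> Ob C" "Y \<in> Ob C"
  shows "Zero C X Y \<in> Hom C X Y" "Add C (Zero C X Y) (Zero C X Y) = Zero C X Y"
proof -
  have g: "comm_group (hom_group C X Y)" using assms unfolding is_preadditive_def by blast
  show "Zero C X Y \<in> Hom C X Y" using comm_groupE(2)[OF g] by (simp add: hom_group_def)
  show "Add C (Zero C X Y) (Zero C X Y) = Zero C X Y"
    using comm_groupE(5)[OF g comm_groupE(2)[OF g]] by (simp add: hom_group_def)
qed

lemma push_zeromor:
  assumes "ET1 C E" "is_preadditive C" "X \<in> Ob C" "A \<in> Ob C" "A' \<in> Ob C" "\<delta> \<in> Ext E X A"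
  shows "Push E X (Zero C A A') \<delta> = EZero E X A'"
proof -
  note zh = zero_hom[OF assms(2,4,5)]
  have i: "Push E X (Zero C A A') \<delta> \<in> Ext E X A'" using push_in[OF assms(1,3,4,5) zh(1) assms(6)] .
  have "Push E X (Zero C A A') \<delta> = EAdd E X A' (Push E X (Zero C A A') \<delta>) (Push E X (Zero C A A') \<delta>)"
    using push_addmor[OF assms(1,3,4,5) zh(1) zh(1) assms(6)] zh(2) by simp
  then show ?thesis using ext_zero_in(3)[OF assms(1,3,5) i] by simp
qed

lemma hom_facts: "is_category C \<Longrightarrow> f \<in> Mor C \<Longrightarrow> f \<in> Hom C (Dom C f) (Cod C f) \<and> Dom C f \<in> Ob C \<and> Cod C f \<in> Ob C"
  unfolding is_category_def Hom_def by blast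

lemma comp_hom: "is_category C \<Longrightarrow> f \<in> Hom C X Y \<Longrightarrow> g \<in> Hom C Y Z \<Longrightarrow> Comp C g f \<in> Hom C X Z"
  unfolding is_category_def Hom_def by blast

lemma comp_assoc: "is_category C \<Longrightarrow> f \<in> Mor C \<Longrightarrow> g \<in> Mor C \<Longrightarrow> h \<in> Mor C \<Longrightarrow>
   Dom C g = Cod C f \<Longrightarrow> Dom C h = Cod C g \<Longrightarrow> Comp C h (Comp C g f) = Comp C (Comp C h g) f"
  unfolding is_category_def by blast

lemma comp_id: "is_category C \<Longrightarrow> f \<in> Mor C \<Longrightarrow> Comp C (Id C (Cod C f)) f = f \<and> Comp C f (Id C (Dom C f)) = f"
  unfolding is_category_def by blast

lemma id_hom: "is_category C \<Longrightarrow> X \<in> Ob C \<Longrightarrow> Id C X \<in> Hom C X X"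
  unfolding is_category_def by blast

theorem theorem3p8:
  fixes C :: "('o, 'm) addcat" and E :: "('o, 'm, 'e) extfun" and s :: "('e, 'm) realization"
    and I :: "'m set"
  assumes "is_additive C"
    and "ET1 C E"
    and "ET2 C E s"
    and "is_ideal C I"
    and "special_precovering C E s I"
  shows "is_cotorsion_pair C E I (perp_right C E I) \<and> I = perp_left C E (perp_right C E I)"
proof -
  have pre: "is_preadditive C" using assms(1) unfolding is_additive_def by blast
  have cat: "is_category C" using pre unfolding is_preadditive_def by blast
  have e1: "ET1 C E" by fact
  have IM: "I \<subseteq> Mor C" using assms(4) unfolding is_ideal_def by blast
  note hf = hom_facts[OF cat]
  have PR_zero: "Zero C X Y \<in> perp_right C E I" if X: "X \<in> Ob C" and Y: "Y \<in> Ob C" for X Y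
  proof -
    note zh = zero_hom[OF pre X Y]
    have zm: "Zero C X Y \<in> Mor C" "Dom C (Zero C X Y) = X" "Cod C (Zero C X Y) = Y"
      using zh(1) unfolding Hom_def by auto
    show ?thesis unfolding perp_right_def
    proof (intro CollectI conjI ballI zm(1))
      fix m \<delta> assume m: "m \<in> I" and d: "\<delta> \<in> Ext E (Cod C m) (Dom C (Zero C X Y))"
      have mm: "m \<in> Hom C (Dom C m) (Cod C m)" "Dom C m \<in> Ob C" "Cod C m \<in> Ob C" using hf m IM by auto
      have "Push E (Cod C m) (Zero C X Y) \<delta> = EZero E (Cod C m) Y"
        using push_zeromor[OF e1 pre mm(3) X Y] d zm by simp
      then show "Pull E (Cod C (Zero C X Y)) m (Push E (Cod C m) (Zero C X Y) \<delta>) =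
            EZero E (Dom C m) (Cod C (Zero C X Y))"
        using pull_zero[OF e1 Y mm(3) mm(2) mm(1)] zm by simp
    qed
  qed
  have PR_add: "Add C f g \<in> perp_right C E I" if f: "f \<in> perp_right C E I" and g: "g \<in> perp_right C E I"
     and dd: "Dom C f = Dom C g" and cc: "Cod C f = Cod C g" for f g
  proof -
    have fm: "f \<in> Mor C" and gm: "g \<in> Mor C" using f g unfolding perp_right_def by auto
    define X where "X = Dom C f"
    define Y where "Y = Cod C f"
    have fh: "f \<in> Hom C X Y" and gh: "g \<in> Hom C X Y" and X: "X \<in> Ob C" and Y: "Y \<in> Ob C"
      using hf[OF fm] hf[OF gm] dd cc unfolding X_def Y_def by auto
    have grp: "comm_group (hom_group C X Y)" using pre X Y unfolding is_preadditive_def by blast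
    have ah: "Add C f g \<in> Hom C X Y" using comm_groupE(1)[OF grp, of f g] fh gh by (simp add: hom_group_def)
    have am: "Add C f g \<in> Mor C" "Dom C (Add C f g) = X" "Cod C (Add C f g) = Y"
      using ah unfolding Hom_def by auto
    show ?thesis unfolding perp_right_def
    proof (intro CollectI conjI ballI am(1))
      fix m \<delta> assume m: "m \<in> I" and d: "\<delta> \<in> Ext E (Cod C m) (Dom C (Add C f g))"
      have mm: "m \<in> Hom C (Dom C m) (Cod C m)" "Dom C m \<in> Ob C" "Cod C m \<in> Ob C" using hf m IM by auto
      have d': "\<delta> \<in> Ext E (Cod C m) X" using d am by simp
      have p1: "Push E (Cod C m) (Add C f g) \<delta> = EAdd E (Cod C m) Y (Push E (Cod C m) f \<delta>) (Push E (Cod C m) g \<delta>)"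
        using push_addmor[OF e1 mm(3) X Y fh gh d'] .
      have z1: "Pull E Y m (Push E (Cod C m) f \<delta>) = EZero E (Dom C m) Y"
        using f m d' unfolding perp_right_def X_def Y_def by auto
      have z2: "Pull E Y m (Push E (Cod C m) g \<delta>) = EZero E (Dom C m) Y"
        using g m d' cc dd unfolding perp_right_def X_def Y_def by auto
      have "Pull E Y m (Push E (Cod C m) (Add C f g) \<delta>) = EZero E (Dom C m) Y"
        unfolding p1 pull_add[OF e1 Y mm(3) mm(2) mm(1) push_in[OF e1 mm(3) X Y fh d'] push_in[OF e1 mm(3) X Y gh d']]
        z1 z2 using ext_zero_in(2)[OF e1 mm(2) Y] .
      then show "Pull E (Cod C (Add C f g)) m (Push E (Cod C m) (Add C f g) \<delta>) =
          EZero E (Dom C m) (Cod C (Add C f g))" using am by simp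
    qed
  qed
  have PR_comp: "Comp C g (Comp C f h) \<in> perp_right C E I" if f: "f \<in> perp_right C E I"
     and gm: "g \<in> Mor C" and hm: "h \<in> Mor C" and gd: "Dom C g = Cod C f" and hc: "Cod C h = Dom C f" for f g h
  proof -
    have fm: "f \<in> Mor C" using f unfolding perp_right_def by auto
    define W where "W = Dom C h"
    define A where "A = Dom C f"
    define B where "B = Cod C f"
    define Z where "Z = Cod C g"
    have fh: "f \<in> Hom C A B" and gh: "g \<in> Hom C B Z" and hh: "h \<in> Hom C W A"
      and W: "W \<in> Ob C" and A: "A \<in> Ob C" and B: "B \<in> Ob C" and Z: "Z \<in> Ob C"
      using hf[OF fm] hf[OF gm] hf[OF hm] gd hc unfolding W_def A_def B_def Z_def by auto
    have th: "Comp C g (Comp C f h) \<in> Hom C W Z" using comp_hom[OF cat comp_hom[OF cat hh fh] gh] .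
    have tm: "Comp C g (Comp C f h) \<in> Mor C" "Dom C (Comp C g (Comp C f h)) = W" "Cod C (Comp C g (Comp C f h)) = Z"
      using th unfolding Hom_def by auto
    show ?thesis unfolding perp_right_def
    proof (intro CollectI conjI ballI tm(1))
      fix m \<delta> assume m: "m \<in> I" and d: "\<delta> \<in> Ext E (Cod C m) (Dom C (Comp C g (Comp C f h)))"
      have mm: "m \<in> Hom C (Dom C m) (Cod C m)" "Dom C m \<in> Ob C" "Cod C m \<in> Ob C" using hf m IM by auto
      have d': "\<delta> \<in> Ext E (Cod C m) W" using d tm by simp
      have d1: "Push E (Cod C m) h \<delta> \<in> Ext E (Cod C m) A" using push_in[OF e1 mm(3) W A hh d'] .
      have d2: "Push E (Cod C m) f (Push E (Cod C m) h \<delta>) \<in> Ext E (Cod C m) B" using push_in[OF e1 mm(3) A B fh d1] .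
      have p: "Push E (Cod C m) (Comp C g (Comp C f h)) \<delta> = Push E (Cod C m) g (Push E (Cod C m) f (Push E (Cod C m) h \<delta>))"
        using push_comp[OF e1 mm(3) W B Z comp_hom[OF cat hh fh] gh d'] push_comp[OF e1 mm(3) W A B hh fh d'] by simp
      have z: "Pull E B m (Push E (Cod C m) f (Push E (Cod C m) h \<delta>)) = EZero E (Dom C m) B"
        using f m d1 unfolding perp_right_def A_def B_def by auto
      have "Pull E Z m (Push E (Cod C m) (Comp C g (Comp C f h)) \<delta>) = EZero E (Dom C m) Z"
        unfolding p bifun[OF e1 B Z mm(3) mm(2) gh mm(1) d2] z using push_zero[OF e1 mm(2) B Z gh] .
      then show "Pull E (Cod C (Comp C g (Comp C f h))) m (Push E (Cod C m) (Comp C g (Comp C f h)) \<delta>) =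
          EZero E (Dom C m) (Cod C (Comp C g (Comp C f h)))" using tm by simp
    qed
  qed
  have PRideal: "is_ideal C (perp_right C E I)"
    unfolding is_ideal_def
  proof (intro conjI ballI impI)
    show "perp_right C E I \<subseteq> Mor C" unfolding perp_right_def by auto
  next
    fix X Y assume "X \<in> Ob C" "Y \<in> Ob C" then show "Zero C X Y \<in> perp_right C E I" by (rule PR_zero)
  next
    fix f g assume "f \<in> perp_right C E I" "g \<in> perp_right C E I" "Dom C f = Dom C g" "Cod C f = Cod C g"
    then show "Add C f g \<in> perp_right C E I" by (rule PR_add)
  next
    fix f g h assume "f \<in> perp_right C E I" "g \<in> Mor C" "h \<in> Mor C" "Dom C g = Cod C f" "Cod C h = Dom C f"
    then show "Comp C g (Comp C f h) \<in> perp_right C E I" by (rule PR_comp)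
  qed
  have sub1: "I \<subseteq> perp_left C E (perp_right C E I)"
  proof
    fix g assume g: "g \<in> I"
    show "g \<in> perp_left C E (perp_right C E I)" unfolding perp_left_def
    proof (intro CollectI conjI ballI)
      show "g \<in> Mor C" using g IM by auto
      fix m \<delta> assume m: "m \<in> perp_right C E I" and d: "\<delta> \<in> Ext E (Cod C g) (Dom C m)"
      show "Pull E (Cod C m) g (Push E (Cod C g) m \<delta>) = EZero E (Dom C g) (Cod C m)"
        using m g d unfolding perp_right_def by auto
    qed
  qed
  have sub2: "perp_left C E (perp_right C E I) \<subseteq> I"
  proof
    fix g assume g: "g \<in> perp_left C E (perp_right C E I)"
    have gm: "g \<in> Mor C" using g unfolding perp_left_def by auto
    define X where "X = Dom C g"
    define C' where "C' = Cod C g"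
    have gh: "g \<in> Hom C X C'" and X: "X \<in> Ob C" and C': "C' \<in> Ob C"
      using hf[OF gm] unfolding X_def C'_def by auto
    obtain i where sp: "is_special_precover C E s I C' i" using assms(5) C' unfolding special_precovering_def by blast
    then obtain \<delta> x y \<delta>' x' j b where iI: "i \<in> I" and im: "i \<in> Mor C" and ic: "Cod C i = C'"
      and yc: "Cod C y = C'" and A'ob: "Dom C x' \<in> Ob C"
      and tm: "is_triangle_morphism C E s \<delta> x y \<delta>' x' i j b (Id C C')"
      and jp: "j \<in> perp_right C E I"
      unfolding is_special_precover_def by blast
    define A' where "A' = Dom C x'"
    have s1: "s \<delta> x y" and s2: "s \<delta>' x' i" and jh: "j \<in> Hom C (Dom C x) A'"
      and pe: "Push E (Cod C y) j \<delta> = Pull E (Dom C x') (Id C C') \<delta>'"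
      using tm unfolding is_triangle_morphism_def A'_def by auto
    have e2: "\<forall>\<delta> x y. s \<delta> x y \<longrightarrow> x \<in> Mor C \<and> y \<in> Mor C \<and> Cod C x = Dom C y \<and>
        \<delta> \<in> Ext E (Cod C y) (Dom C x)" using assms(3) unfolding ET2_def by (rule conjunct1)
    have dE: "\<delta> \<in> Ext E C' (Dom C x)" using e2 s1 yc by auto
    have d'E: "\<delta>' \<in> Ext E C' A'" using e2 s2 ic unfolding A'_def by auto
    have dlt': "\<delta>' = Push E C' j \<delta>"
      using pe pull_id[OF e1 A'ob C' d'E[unfolded A'_def]] yc unfolding A'_def by simp
    have jdom: "Dom C j = Dom C x" "Cod C j = A'" using jh unfolding Hom_def by auto
    have zg: "Pull E A' g \<delta>' = EZero E X A'"
      using g jp dE jdom unfolding perp_left_def dlt' X_def C'_def by auto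
    obtain P iA iX pA pX where bp: "is_biprod C A' X P iA iX pA pX"
      using assms(1) A'ob X unfolding is_additive_def A'_def by blast
    have bpf: "P \<in> Ob C" "iA \<in> Hom C A' P" "iX \<in> Hom C X P" "pA \<in> Hom C P A'" "pX \<in> Hom C P X"
      "Comp C pX iX = Id C X" using bp unfolding is_biprod_def by auto
    have z6: "\<forall>A \<in> Ob C. \<forall>X \<in> Ob C. \<forall>P iA iX pA pX. is_biprod C A X P iA iX pA pX \<longrightarrow>
        s (EZero E X A) iA pX"
      using assms(3)[unfolded ET2_def, THEN conjunct2, THEN conjunct2, THEN conjunct2, THEN conjunct2,
         THEN conjunct2, THEN conjunct1] .
    have s0: "s (EZero E X A') iA pX" using z6 A'ob X bp unfolding A'_def by blast
    have iAd: "Dom C iA = A'" "Cod C iA = P" "Dom C pX = P" "Cod C pX = X" "Dom C iX = X" "Cod C iX = P"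
      using bpf unfolding Hom_def by auto
    have mr: "\<forall>\<delta> x y \<delta>' x' y' a c. s \<delta> x y \<longrightarrow> s \<delta>' x' y' \<longrightarrow>
        a \<in> Hom C (Dom C x) (Dom C x') \<longrightarrow> c \<in> Hom C (Cod C y) (Cod C y') \<longrightarrow>
        Push E (Cod C y) a \<delta> = Pull E (Dom C x') c \<delta>' \<longrightarrow>
        (\<exists>b \<in> Hom C (Cod C x) (Cod C x'). Comp C b x = Comp C x' a \<and> Comp C y' b = Comp C c y)"
      using assms(3)[unfolded ET2_def, THEN conjunct2, THEN conjunct2, THEN conjunct2, THEN conjunct2,
         THEN conjunct1] .
    have idh: "Id C A' \<in> Hom C (Dom C iA) (Dom C x')" using id_hom[OF cat A'ob[folded A'_def]] iAd unfolding A'_def by simp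
    have gh2: "g \<in> Hom C (Cod C pX) (Cod C i)" using gh iAd ic by simp
    have eq: "Push E (Cod C pX) (Id C A') (EZero E X A') = Pull E (Dom C x') g \<delta>'"
      using push_id[OF e1 X A'ob[folded A'_def] ext_zero_in(1)[OF e1 X A'ob[folded A'_def]]] zg iAd
      unfolding A'_def by simp
    obtain b' where b'h: "b' \<in> Hom C (Cod C iA) (Cod C x')" and b'eq: "Comp C i b' = Comp C g pX"
      using mr s0 s2 idh gh2 eq by blast
    have b'h2: "b' \<in> Hom C P (Cod C x')" using b'h iAd by simp
    have b'm: "b' \<in> Mor C" "Dom C b' = P" using b'h iAd unfolding Hom_def by auto
    have iXm: "iX \<in> Mor C" and pXm: "pX \<in> Mor C" using bpf unfolding Hom_def by auto
    have idom: "Dom C i = Cod C b'" using b'h s2 e2 unfolding Hom_def by auto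
    have "Comp C i (Comp C b' iX) = Comp C (Comp C i b') iX"
      using comp_assoc[OF cat iXm b'm(1) im] b'm iAd idom by simp
    also have "\<dots> = Comp C (Comp C g pX) iX" using b'eq by simp
    also have "\<dots> = Comp C g (Comp C pX iX)"
      using comp_assoc[OF cat iXm pXm gm] iAd gh unfolding Hom_def by simp
    also have "\<dots> = g" using bpf(6) comp_id[OF cat gm] unfolding X_def by simp
    finally have gfac: "Comp C i (Comp C b' iX) = g" .
    have cm: "Comp C b' iX \<in> Mor C" "Cod C (Comp C b' iX) = Dom C i"
      using comp_hom[OF cat bpf(3) b'h2] b'h2 idom unfolding Hom_def by auto
    have idm: "Id C (Cod C i) \<in> Mor C" "Dom C (Id C (Cod C i)) = Cod C i"
      using id_hom[OF cat] hf[OF im] unfolding Hom_def by auto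
    have "Comp C (Id C (Cod C i)) (Comp C i (Comp C b' iX)) \<in> I"
      using assms(4) iI idm cm unfolding is_ideal_def by blast
    then show "g \<in> I" using gfac comp_id[OF cat gm] ic unfolding C'_def by simp
  qed
  have eqI: "I = perp_left C E (perp_right C E I)" using sub1 sub2 by blast
  show ?thesis unfolding is_cotorsion_pair_def using assms(4) PRideal eqI by blast
qed

end
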